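(* Let $p,q,r\in(0,1)$ with $p+q+r=1$. Let $X_1,\eta_2,\eta_3,\ldots$ be independent random variables, each taking the values $1,-1,0$ with probabilities $p,q,r$ respectively, and let $K_3,K_4,\ldots$ be i.i.d. random variables, uniformly distributed on $\{1,2\}$ and independent of the previous ones. Set $X_2=\eta_2X_1$, $X_{n+1}=\eta_{n+1}X_{K_{n+1}}$ for $n\ge2$, and $S_n=\sum_{k=1}^nX_k$. Then: (a) as $n\to\infty$, $S_n/n$ converges in distribution to a random variable taking the value $p-q$ with probability $p^2$, the value $(p-q)/2$ with probability $pr$, the value $0$ with probability $pq+q^2+r$, the value $-(p-q)/2$ with probability $qr$, and the value $-(p-q)$ with probability $pq$; (b) as $n\to\infty$, $E(S_n/n)\to\dfrac{(p-q)^2}{2}(1+p-q)$ and $\operatorname{Var}(S_n/n)\to\dfrac{(p-q)^2}{4}\Big((p+q)(1+3p-q)-(p-q)^2\big(1+(p-q)\big)^2\Big)$.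
   Context: This is the elephant random walk with delays in which the elephant remembers only the first two steps: the second step is built from the first, and each step $n+1\ge3$ picks one of the first two steps uniformly at random and repeats it (probability $p$), reverses it (probability $q$), or is $0$ (probability $r$). *)

theory Defs
  imports "HOL-Probability.Probability"
begin

text \<open>X_2 = eta_2 X_1 and, for n \<ge> 3,
  X_n = eta_n X_{K_n}.  (Index 0 is unused and set to 0.)\<close>
definition erw_X :: "('a \<Rightarrow> real) \<Rightarrow> (nat \<Rightarrow> 'a \<Rightarrow> real) \<Rightarrow> (nat \<Rightarrow> 'a \<Rightarrow> nat) \<Rightarrow> nat \<Rightarrow> 'a \<Rightarrow> real" where
  "erw_X X1 \<eta> K n \<omega> =
     (if n = 0 then 0
      else if n = 1 then X1 \<omega>
      else if n = 2 then \<eta> 2 \<omega> * X1 \<omega>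
      else \<eta> n \<omega> * (if K n \<omega> = 1 then X1 \<omega> else \<eta> 2 \<omega> * X1 \<omega>))"

definition erw_S :: "('a \<Rightarrow> real) \<Rightarrow> (nat \<Rightarrow> 'a \<Rightarrow> real) \<Rightarrow> (nat \<Rightarrow> 'a \<Rightarrow> nat) \<Rightarrow> nat \<Rightarrow> 'a \<Rightarrow> real" where
  "erw_S X1 \<eta> K n \<omega> = (\<Sum>k=1..n. erw_X X1 \<eta> K k \<omega>)"

text \<open>The joint family used to express mutual independence:
  Inl 1 is X1, Inl n (n \<ge> 2) is eta n, Inr n (n \<ge> 3) is K n (as a real).\<close>
definition erw_family :: "('a \<Rightarrow> real) \<Rightarrow> (nat \<Rightarrow> 'a \<Rightarrow> real) \<Rightarrow> (nat \<Rightarrow> 'a \<Rightarrow> nat) \<Rightarrow> nat + nat \<Rightarrow> 'a \<Rightarrow> real" where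
  "erw_family X1 \<eta> K i = (case i of Inl n \<Rightarrow> (if n = 1 then X1 else \<eta> n)
                                 | Inr n \<Rightarrow> (\<lambda>\<omega>. real (K n \<omega>)))"

definition erw_index :: "(nat + nat) set" where
  "erw_index = Inl ` {1..} \<union> Inr ` {3..}"

definition erw_limit :: "real \<Rightarrow> real \<Rightarrow> real \<Rightarrow> real pmf" where
  "erw_limit p q r = pmf_of_list
     [(p - q, p^2), ((p - q)/2, p*r), (0, p*q + q^2 + r), (-(p - q)/2, q*r), (-(p - q), p*q)]"

end

theory Submission
  imports Defs
begin

locale erw = prob_space M for M :: "'a measure" +
  fixes X1 :: "'a \<Rightarrow> real" and \<eta> :: "nat \<Rightarrow> 'a \<Rightarrow> real"
    and K :: "nat \<Rightarrow> 'a \<Rightarrow> nat" and p q r :: real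
  assumes pq: "0 < p" "p < 1" "0 < q" "q < 1" "0 < r" "r < 1" "p + q + r = 1"
    and X1m: "X1 \<in> borel_measurable M"
    and X1p: "measure M {\<omega>\<in>space M. X1 \<omega> = 1} = p"
    and X1q: "measure M {\<omega>\<in>space M. X1 \<omega> = -1} = q"
    and X1r: "measure M {\<omega>\<in>space M. X1 \<omega> = 0} = r"
    and etam: "\<And>n. n \<ge> 2 \<Longrightarrow> \<eta> n \<in> borel_measurable M"
    and etap: "\<And>n. n \<ge> 2 \<Longrightarrow> measure M {\<omega>\<in>space M. \<eta> n \<omega> = 1} = p"
    and etaq: "\<And>n. n \<ge> 2 \<Longrightarrow> measure M {\<omega>\<in>space M. \<eta> n \<omega> = -1} = q"
    and etar: "\<And>n. n \<ge> 2 \<Longrightarrow> measure M {\<omega>\<in>space M. \<eta> n \<omega> = 0} = r"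
    and Km: "\<And>n. n \<ge> 3 \<Longrightarrow> K n \<in> measurable M (count_space UNIV)"
    and K1: "\<And>n. n \<ge> 3 \<Longrightarrow> measure M {\<omega>\<in>space M. K n \<omega> = 1} = 1/2"
    and K2: "\<And>n. n \<ge> 3 \<Longrightarrow> measure M {\<omega>\<in>space M. K n \<omega> = 2} = 1/2"
    and indep: "indep_vars (\<lambda>_. borel) (erw_family X1 \<eta> K) erw_index"
begin

abbreviation "F \<equiv> erw_family X1 \<eta> K"

lemma sets_eq: "(V::'a\<Rightarrow>real) \<in> borel_measurable M \<Longrightarrow> {\<omega>\<in>space M. V \<omega> = (c::real)} \<in> events"
  by measurable

lemma three_AE:
  fixes V :: "'a \<Rightarrow> real"
  assumes V: "V \<in> borel_measurable M"
    and "measure M {\<omega>\<in>space M. V \<omega> = 1} = p"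
    and "measure M {\<omega>\<in>space M. V \<omega> = -1} = q"
    and "measure M {\<omega>\<in>space M. V \<omega> = 0} = r"
  shows "AE \<omega> in M. V \<omega> \<in> {-1,0,1}"
proof -
  note S = sets_eq[OF V]
  have "prob ({\<omega>\<in>space M. V \<omega> = 1} \<union> {\<omega>\<in>space M. V \<omega> = -1} \<union> {\<omega>\<in>space M. V \<omega> = 0}) = 
     prob ({\<omega>\<in>space M. V \<omega> = 1} \<union> {\<omega>\<in>space M. V \<omega> = -1}) + prob {\<omega>\<in>space M. V \<omega> = 0}"
    by (rule finite_measure_Union) (use S in auto)
  also have "prob ({\<omega>\<in>space M. V \<omega> = 1} \<union> {\<omega>\<in>space M. V \<omega> = -1}) = 
     prob {\<omega>\<in>space M. V \<omega> = 1} + prob {\<omega>\<in>space M. V \<omega> = -1}"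
    by (rule finite_measure_Union) (use S in auto)
  finally have "prob ({\<omega>\<in>space M. V \<omega> = 1} \<union> {\<omega>\<in>space M. V \<omega> = -1} \<union> {\<omega>\<in>space M. V \<omega> = 0}) = 1"
    using assms pq by simp
  moreover have "{\<omega>\<in>space M. V \<omega> = 1} \<union> {\<omega>\<in>space M. V \<omega> = -1} \<union> {\<omega>\<in>space M. V \<omega> = 0}
     = {\<omega>\<in>space M. V \<omega> \<in> {-1,0,1}}" by auto
  ultimately have "prob {\<omega>\<in>space M. V \<omega> \<in> {-1,0,1}} = 1" by simp
  moreover have "{\<omega>\<in>space M. V \<omega> \<in> {-1,0,1}} \<in> events" using V by measurable
  ultimately show ?thesis by (subst (asm) prob_Collect_eq_1) auto
qed

lemma two_AE:
  assumes V: "V \<in> measurable M (count_space UNIV)"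
    and "measure M {\<omega>\<in>space M. V \<omega> = (1::nat)} = 1/2"
    and "measure M {\<omega>\<in>space M. V \<omega> = 2} = 1/2"
  shows "AE \<omega> in M. V \<omega> \<in> {1,2}"
proof -
  have S: "{\<omega>\<in>space M. V \<omega> = c} \<in> events" for c
    using V by measurable
  have "prob ({\<omega>\<in>space M. V \<omega> = 1} \<union> {\<omega>\<in>space M. V \<omega> = 2}) = 
     prob {\<omega>\<in>space M. V \<omega> = 1} + prob {\<omega>\<in>space M. V \<omega> = 2}"
    by (rule finite_measure_Union) (use S in auto)
  also have "\<dots> = 1" using assms by simp
  moreover have "{\<omega>\<in>space M. V \<omega> = 1} \<union> {\<omega>\<in>space M. V \<omega> = 2}
     = {\<omega>\<in>space M. V \<omega> \<in> {1,2}}" by auto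
  ultimately have "prob {\<omega>\<in>space M. V \<omega> \<in> {1,2}} = 1" by simp
  moreover have "{\<omega>\<in>space M. V \<omega> \<in> {1,2}} \<in> events"
  proof -
    have "{\<omega>\<in>space M. V \<omega> \<in> {1,2}} = V -` {1,2} \<inter> space M" by auto
    then show ?thesis using measurable_sets[OF V, of "{1,2}"] by simp
  qed
  ultimately show ?thesis by (subst (asm) prob_Collect_eq_1) auto
qed

definition good where
  "good \<omega> \<longleftrightarrow> X1 \<omega> \<in> {-1,0,1} \<and> (\<forall>n\<ge>2. \<eta> n \<omega> \<in> {-1,0,1}) \<and> (\<forall>n\<ge>3. K n \<omega> \<in> {1,2})"

lemma AE_good: "AE \<omega> in M. good \<omega>"
proof -
  have "AE \<omega> in M. X1 \<omega> \<in> {-1,0,1}" using three_AE[OF X1m X1p X1q X1r] .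
  moreover have h1: "AE \<omega> in M. n \<ge> 2 \<longrightarrow> \<eta> n \<omega> \<in> {-1,0,1}" for n
    by (cases "n \<ge> 2") (use three_AE[OF etam etap etaq etar, of n] in auto)
  have "AE \<omega> in M. \<forall>n. n \<ge> 2 \<longrightarrow> \<eta> n \<omega> \<in> {-1,0,1}"
    by (rule AE_all_countable[THEN iffD2]) (use h1 in blast)
  moreover have h2: "AE \<omega> in M. n \<ge> 3 \<longrightarrow> K n \<omega> \<in> {1,2}" for n
    by (cases "n \<ge> 3") (use two_AE[OF Km K1 K2, of n] in auto)
  have "AE \<omega> in M. \<forall>n. n \<ge> 3 \<longrightarrow> K n \<omega> \<in> {1,2}"
    by (rule AE_all_countable[THEN iffD2]) (use h2 in blast)
  ultimately show ?thesis unfolding good_def by eventually_elim auto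
qed

lemma F_meas: "i \<in> erw_index \<Longrightarrow> F i \<in> borel_measurable M"
  using indep unfolding indep_vars_def by auto

lemma eta2m[measurable]: "\<eta> 2 \<in> borel_measurable M" using etam by simp
lemma X1m'[measurable]: "X1 \<in> borel_measurable M" using X1m by simp

lemma X_meas[measurable]: "erw_X X1 \<eta> K n \<in> borel_measurable M"
proof -
  consider "n \<le> 2" | "n \<ge> 3" by linarith
  then show ?thesis
  proof cases
    case 1
    then have "n = 0 \<or> n = 1 \<or> n = 2" by auto
    then show ?thesis by (auto simp: erw_X_def[abs_def])
  next
    case 2
    have [measurable]: "K n \<in> measurable M (count_space UNIV)" "\<eta> n \<in> borel_measurable M"
      using 2 Km etam by auto
    have "erw_X X1 \<eta> K n = (\<lambda>\<omega>. \<eta> n \<omega> * (if K n \<omega> = 1 then X1 \<omega> else \<eta> 2 \<omega> * X1 \<omega>))"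
      using 2 by (auto simp: erw_X_def fun_eq_iff)
    then show ?thesis by simp
  qed
qed

lemma X_bound: "good \<omega> \<Longrightarrow> \<bar>erw_X X1 \<eta> K n \<omega>\<bar> \<le> 1"
proof -
  assume g: "good \<omega>"
  then have a: "\<bar>X1 \<omega>\<bar> \<le> 1" and b: "\<And>n. n \<ge> 2 \<Longrightarrow> \<bar>\<eta> n \<omega>\<bar> \<le> 1"
    unfolding good_def by auto
  have c: "\<bar>\<eta> 2 \<omega> * X1 \<omega>\<bar> \<le> 1" using a b[of 2] by (simp add: abs_mult mult_le_one)
  show ?thesis
    unfolding erw_X_def using a b c by (auto simp: abs_mult intro!: mult_le_one)
qed

lemma int_bound: "f \<in> borel_measurable M \<Longrightarrow> AE \<omega> in M. \<bar>f \<omega>\<bar> \<le> (B::real) \<Longrightarrow> integrable M f"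
  by (rule integrable_const_bound[where B=B]) auto

lemma abs_int_le: 
  assumes "f \<in> borel_measurable M" "AE \<omega> in M. \<bar>f \<omega>\<bar> \<le> (B::real)"
  shows "\<bar>integral\<^sup>L M f\<bar> \<le> B"
proof -
  have "\<bar>integral\<^sup>L M f\<bar> \<le> integral\<^sup>L M (\<lambda>\<omega>. \<bar>f \<omega>\<bar>)"
    by (rule integral_abs_bound)
  also have "\<dots> \<le> integral\<^sup>L M (\<lambda>\<omega>. B)"
    by (rule integral_mono_AE) (use assms in \<open>auto intro: int_bound\<close>)
  also have "\<dots> = B" by (simp add: prob_space)
  finally show ?thesis .
qed

lemma ind_meas[measurable]: "(\<lambda>x::real. if x = a then 1 else (0::real)) \<in> borel_measurable borel"
proof -
  have "(\<lambda>x::real. if x = a then 1 else (0::real)) = indicator {a}"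
    by (auto simp: indicator_def fun_eq_iff)
  then show ?thesis by simp
qed

lemma ind_int:
  assumes "V \<in> borel_measurable M"
  shows "integral\<^sup>L M (\<lambda>\<omega>. if V \<omega> = (a::real) then 1 else (0::real)) = prob {\<omega>\<in>space M. V \<omega> = a}"
proof -
  have "integral\<^sup>L M (\<lambda>\<omega>. if V \<omega> = (a::real) then 1 else (0::real)) =
        integral\<^sup>L M (indicator {\<omega>\<in>space M. V \<omega> = a} :: 'a \<Rightarrow> real)"
    by (rule Bochner_Integration.integral_cong) (auto simp: indicator_def)
  also have "\<dots> = prob {\<omega>\<in>space M. V \<omega> = a}"
    by (simp add: Int_absorb2)
  finally show ?thesis .
qed

lemma collapse:
  "finite S \<Longrightarrow> x \<in> S \<Longrightarrow> (\<Sum>a\<in>S. (if x = a then 1 else (0::real)) * h a) = h x"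
proof -
  assume "finite S" "x \<in> S"
  have "(\<Sum>a\<in>S. (if x = a then 1 else (0::real)) * h a) = (\<Sum>a\<in>S. if x = a then h a else 0)"
    by (rule sum.cong) auto
  also have "\<dots> = h x" using \<open>x \<in> S\<close> \<open>finite S\<close> by simp
  finally show ?thesis .
qed

lemma disc_int:
  fixes V :: "'a \<Rightarrow> real" and f :: "real \<Rightarrow> real"
  assumes V[measurable]: "V \<in> borel_measurable M" and S: "finite S" and ae: "AE \<omega> in M. V \<omega> \<in> S"
    and f[measurable]: "(\<lambda>\<omega>. f (V \<omega>)) \<in> borel_measurable M"
  shows "integral\<^sup>L M (\<lambda>\<omega>. f (V \<omega>)) = (\<Sum>s\<in>S. f s * prob {\<omega>\<in>space M. V \<omega> = (s::real)})"
proof -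
  have "integral\<^sup>L M (\<lambda>\<omega>. f (V \<omega>)) = integral\<^sup>L M (\<lambda>\<omega>. \<Sum>s\<in>S. f s * (if V \<omega> = s then 1 else 0))"
  proof (rule integral_cong_AE)
    show "(\<lambda>\<omega>. f (V \<omega>)) \<in> borel_measurable M" by fact
    show "(\<lambda>\<omega>. \<Sum>s\<in>S. f s * (if V \<omega> = s then 1 else 0)) \<in> borel_measurable M" by measurable
    show "AE \<omega> in M. f (V \<omega>) = (\<Sum>s\<in>S. f s * (if V \<omega> = s then 1 else 0))"
      using ae
    proof eventually_elim
      case (elim \<omega>)
      have "(\<Sum>s\<in>S. f s * (if V \<omega> = s then 1 else 0)) = (\<Sum>s\<in>S. (if V \<omega> = s then 1 else 0) * f s)"
        by (simp add: mult.commute)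
      also have "\<dots> = f (V \<omega>)" using collapse[OF S elim] .
      finally show ?case by simp
    qed
  qed
  also have "\<dots> = (\<Sum>s\<in>S. integral\<^sup>L M (\<lambda>\<omega>. f s * (if V \<omega> = s then 1 else 0)))"
  proof (rule Bochner_Integration.integral_sum)
    fix s assume "s \<in> S"
    show "integrable M (\<lambda>\<omega>. f s * (if V \<omega> = s then 1 else 0))"
      by (rule int_bound[where B="\<bar>f s\<bar>"]) auto
  qed
  also have "\<dots> = (\<Sum>s\<in>S. f s * prob {\<omega>\<in>space M. V \<omega> = (s::real)})"
    by (simp add: ind_int)
  finally show ?thesis .
qed

lemma prod_int:
  fixes \<phi> :: "nat + nat \<Rightarrow> real \<Rightarrow> real"
  assumes J: "finite J" "J \<subseteq> erw_index"
    and \<phi>m: "\<And>i. i \<in> J \<Longrightarrow> \<phi> i \<in> borel_measurable borel"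
    and \<phi>i: "\<And>i. i \<in> J \<Longrightarrow> integrable M (\<lambda>\<omega>. \<phi> i (F i \<omega>))"
  shows "integral\<^sup>L M (\<lambda>\<omega>. \<Prod>i\<in>J. \<phi> i (F i \<omega>)) = (\<Prod>i\<in>J. integral\<^sup>L M (\<lambda>\<omega>. \<phi> i (F i \<omega>)))"
    and "integrable M (\<lambda>\<omega>. \<Prod>i\<in>J. \<phi> i (F i \<omega>))"
proof -
  have ind: "indep_vars (\<lambda>_. borel) (\<lambda>i \<omega>. (\<phi> i (F i \<omega>)::real)) J"
    by (rule indep_vars_compose2[OF indep_vars_subset[OF indep J(2)]]) (use \<phi>m in auto)
  show "integral\<^sup>L M (\<lambda>\<omega>. \<Prod>i\<in>J. \<phi> i (F i \<omega>)) = (\<Prod>i\<in>J. integral\<^sup>L M (\<lambda>\<omega>. \<phi> i (F i \<omega>)))"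
    by (rule indep_vars_lebesgue_integral[OF J(1) ind \<phi>i])
  show "integrable M (\<lambda>\<omega>. \<Prod>i\<in>J. \<phi> i (F i \<omega>))"
    by (rule indep_vars_integrable[OF J(1) ind \<phi>i])
qed


lemma collapse2:
  assumes "finite A" "finite B" "x1 \<in> A" "x2 \<in> B"
  shows "(\<Sum>a\<in>A. \<Sum>b\<in>B. (if x1 = a then 1 else (0::real)) * ((if x2 = b then 1 else 0) * H a b)) = H x1 x2"
proof -
  have "(\<Sum>a\<in>A. \<Sum>b\<in>B. (if x1 = a then 1 else (0::real)) * ((if x2 = b then 1 else 0) * H a b))
     = (\<Sum>a\<in>A. (if x1 = a then 1 else (0::real)) * (\<Sum>b\<in>B. (if x2 = b then 1 else 0) * H a b))"
    by (simp only: sum_distrib_left)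
  also have "\<dots> = (\<Sum>a\<in>A. (if x1 = a then 1 else (0::real)) * H a x2)"
    by (intro sum.cong refl arg_cong2[where f=times] collapse) (use assms in auto)
  also have "\<dots> = H x1 x2" by (rule collapse) (use assms in auto)
  finally show ?thesis .
qed

lemma collapse4:
  assumes "finite A" "finite B" "x1 \<in> A" "x2 \<in> A" "x3 \<in> B" "x4 \<in> B"
  shows "(\<Sum>a\<in>A. \<Sum>b\<in>A. \<Sum>s\<in>B. \<Sum>t\<in>B. (if x1 = a then 1 else (0::real)) * ((if x2 = b then 1 else 0) *
      ((if x3 = s then 1 else 0) * ((if x4 = t then 1 else 0) * H a b s t)))) = H x1 x2 x3 x4"
proof -
  have "(\<Sum>a\<in>A. \<Sum>b\<in>A. \<Sum>s\<in>B. \<Sum>t\<in>B. (if x1 = a then 1 else (0::real)) * ((if x2 = b then 1 else 0) *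
      ((if x3 = s then 1 else 0) * ((if x4 = t then 1 else 0) * H a b s t))))
    = (\<Sum>a\<in>A. \<Sum>b\<in>A. (if x1 = a then 1 else (0::real)) * ((if x2 = b then 1 else 0) *
      (\<Sum>s\<in>B. \<Sum>t\<in>B. (if x3 = s then 1 else 0) * ((if x4 = t then 1 else 0) * H a b s t))))"
    by (simp only: sum_distrib_left)
  also have "\<dots> = (\<Sum>a\<in>A. \<Sum>b\<in>A. (if x1 = a then 1 else (0::real)) * ((if x2 = b then 1 else 0) *
      H a b x3 x4))"
    by (intro sum.cong refl arg_cong2[where f=times] collapse2) (use assms in auto)
  also have "\<dots> = H x1 x2 x3 x4"
    by (rule collapse2) (use assms in auto)
  finally show ?thesis .
qed

lemma F_simps: "F (Inl 1) = X1" "F (Inl (Suc 0)) = X1" "n \<noteq> 1 \<Longrightarrow> F (Inl n) = \<eta> n" "F (Inr n) = (\<lambda>\<omega>. real (K n \<omega>))"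
  by (simp_all add: erw_family_def)

lemma idx: "Inl n \<in> erw_index \<longleftrightarrow> n \<ge> 1" "Inr n \<in> erw_index \<longleftrightarrow> n \<ge> 3"
  by (auto simp: erw_index_def)

lemma F_bound: "i \<in> erw_index \<Longrightarrow> AE \<omega> in M. \<bar>F i \<omega>\<bar> \<le> 2"
  using AE_good
proof eventually_elim
  case (elim \<omega>)
  assume i: "i \<in> erw_index"
  then consider "i = Inl 1" | n where "i = Inl n" "n \<ge> 2" | n where "i = Inr n" "n \<ge> 3"
    unfolding erw_index_def by force
  then show ?case
  proof cases
    case 1 then show ?thesis using elim by (auto simp: good_def erw_family_def)
  next
    case 2 then show ?thesis using elim by (auto simp: good_def erw_family_def)
  next
    case 3 then show ?thesis using elim by (auto simp: good_def erw_family_def)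
  qed
qed

lemma int_comp:
  assumes "i \<in> erw_index" "\<psi> \<in> borel_measurable borel" "\<And>y. \<bar>y\<bar> \<le> 2 \<Longrightarrow> \<bar>\<psi> y\<bar> \<le> (B::real)"
  shows "integrable M (\<lambda>\<omega>. \<psi> (F i \<omega>))"
proof (rule int_bound)
  show "(\<lambda>\<omega>. \<psi> (F i \<omega>)) \<in> borel_measurable M"
    using measurable_compose[OF F_meas[OF assms(1)] assms(2)] by (simp add: comp_def)
  show "AE \<omega> in M. \<bar>\<psi> (F i \<omega>)\<bar> \<le> B"
    using F_bound[OF assms(1)] by eventually_elim (use assms(3) in auto)
qed

lemma ind_bound: "\<bar>(if y = (a::real) then 1 else (0::real))\<bar> \<le> 1" by simp

lemma lin_meas[measurable]: "(\<lambda>y::real. y * c1 - c2) \<in> borel_measurable borel" by measurable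

lemma lin_bound: "\<bar>y\<bar> \<le> 2 \<Longrightarrow> \<bar>y * c1 - c2\<bar> \<le> 2 * \<bar>c1\<bar> + \<bar>c2::real\<bar>"
proof -
  assume "\<bar>y\<bar> \<le> 2"
  then have "\<bar>y * c1\<bar> \<le> 2 * \<bar>c1\<bar>" by (simp add: abs_mult mult_right_mono)
  then show ?thesis by linarith
qed

lemma indc_meas[measurable]: "(\<lambda>y::real. (if y = a then 1 else 0) * (c::real)) \<in> borel_measurable borel"
  by measurable

lemma indc_bound: "\<bar>(if y = (a::real) then 1 else 0) * (c::real)\<bar> \<le> \<bar>c\<bar>" by simp

lemma eta_lin: "n \<ge> 2 \<Longrightarrow> integral\<^sup>L M (\<lambda>\<omega>. \<eta> n \<omega> * c1 - c2) = (p - q) * c1 - c2"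
proof -
  assume n: "n \<ge> 2"
  have "integral\<^sup>L M (\<lambda>\<omega>. \<eta> n \<omega> * c1 - c2) = (\<Sum>s\<in>{-1,0,1}. (s * c1 - c2) * prob {\<omega>\<in>space M. \<eta> n \<omega> = s})"
    by (rule disc_int[where f="\<lambda>y. y * c1 - c2"]) (use n etam three_AE[OF etam etap etaq etar, of n] in auto)
  also have "\<dots> = (p - q) * c1 - c2 * (p + q + r)" using n etap etaq etar by (simp add: algebra_simps)
  finally show ?thesis using pq by simp
qed

definition L where "L \<omega> = (p - q) * X1 \<omega> * (1 + \<eta> 2 \<omega>) / 2"
definition Z where "Z k \<omega> = erw_X X1 \<eta> K k \<omega> - L \<omega>"

lemma L_meas[measurable]: "L \<in> borel_measurable M" unfolding L_def[abs_def] by measurable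
lemma Z_meas[measurable]: "Z k \<in> borel_measurable M" unfolding Z_def[abs_def] by measurable

lemma L_bound: "good \<omega> \<Longrightarrow> \<bar>L \<omega>\<bar> \<le> 1"
  using pq unfolding L_def good_def by (auto simp: abs_if)

lemma Z_bound: "good \<omega> \<Longrightarrow> \<bar>Z k \<omega>\<bar> \<le> 2"
  using L_bound[of \<omega>] X_bound[of \<omega> k] unfolding Z_def by linarith

lemma E2:
  fixes g :: "real \<Rightarrow> real \<Rightarrow> real"
  assumes g[measurable]: "(\<lambda>\<omega>. g (X1 \<omega>) (\<eta> 2 \<omega>)) \<in> borel_measurable M"
  shows "integral\<^sup>L M (\<lambda>\<omega>. g (X1 \<omega>) (\<eta> 2 \<omega>)) = (\<Sum>a\<in>{-1,0,1}. \<Sum>b\<in>{-1,0,1}.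
     prob {\<omega>\<in>space M. X1 \<omega> = a} * (prob {\<omega>\<in>space M. \<eta> 2 \<omega> = b} * g a b))"
proof -
  define A where "A = {-1,0,1::real}"
  define J :: "(nat + nat) set" where "J = {Inl 1, Inl 2}"
  define \<phi> where "\<phi> a b = (\<lambda>(i::nat+nat) y. if i = Inl 1 then (if y = a then 1 else 0)
        else (if y = b then 1 else 0) * g a b)" for a b :: real
  define T where "T a b \<omega> = (\<Prod>i\<in>J. \<phi> a b i (F i \<omega>))" for a b \<omega>
  have J: "finite J" "J \<subseteq> erw_index" by (auto simp: J_def idx)
  have \<phi>m: "\<phi> a b i \<in> borel_measurable borel" for a b i
    unfolding \<phi>_def by (cases "i = Inl 1") simp_all
  have \<phi>i: "integrable M (\<lambda>\<omega>. \<phi> a b i (F i \<omega>))" if "i \<in> J" for a b i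
  proof (cases "i = Inl 1")
    case True
    then show ?thesis using that J by (auto simp: \<phi>_def intro!: int_comp[where B=1])
  next
    case False
    then have "\<phi> a b i = (\<lambda>y. (if y = b then 1 else 0) * g a b)" by (simp add: \<phi>_def fun_eq_iff)
    moreover have "integrable M (\<lambda>\<omega>. (\<lambda>y. (if y = b then 1 else 0) * g a b) (F i \<omega>))"
      by (rule int_comp[where B="\<bar>g a b\<bar>"]) (use that J in auto)
    ultimately show ?thesis by simp
  qed
  have Tint: "integrable M (T a b)" for a b
    unfolding T_def[abs_def] by (rule prod_int(2)[OF J \<phi>m \<phi>i])
  have Teq: "integral\<^sup>L M (T a b) = prob {\<omega>\<in>space M. X1 \<omega> = a} * (prob {\<omega>\<in>space M. \<eta> 2 \<omega> = b} * g a b)" for a b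
  proof -
    have "integral\<^sup>L M (T a b) = (\<Prod>i\<in>J. integral\<^sup>L M (\<lambda>\<omega>. \<phi> a b i (F i \<omega>)))"
      unfolding T_def[abs_def] by (rule prod_int(1)[OF J \<phi>m \<phi>i])
    also have "\<dots> = integral\<^sup>L M (\<lambda>\<omega>. if X1 \<omega> = a then 1 else 0) *
        integral\<^sup>L M (\<lambda>\<omega>. (if \<eta> 2 \<omega> = b then 1 else 0) * g a b)"
      by (simp add: J_def \<phi>_def F_simps)
    also have "\<dots> = prob {\<omega>\<in>space M. X1 \<omega> = a} * (prob {\<omega>\<in>space M. \<eta> 2 \<omega> = b} * g a b)"
      by (simp add: ind_int)
    finally show ?thesis .
  qed
  have ae: "AE \<omega> in M. g (X1 \<omega>) (\<eta> 2 \<omega>) = (\<Sum>a\<in>A. \<Sum>b\<in>A. T a b \<omega>)"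
    using AE_good
  proof eventually_elim
    case (elim \<omega>)
    then have x: "X1 \<omega> \<in> A" "\<eta> 2 \<omega> \<in> A" by (auto simp: good_def A_def)
    have "(\<Sum>a\<in>A. \<Sum>b\<in>A. T a b \<omega>) = (\<Sum>a\<in>A. \<Sum>b\<in>A. (if X1 \<omega> = a then 1 else (0::real)) * 
        ((if \<eta> 2 \<omega> = b then 1 else 0) * g a b))"
      by (intro sum.cong refl) (simp add: T_def J_def \<phi>_def F_simps)
    also have "\<dots> = g (X1 \<omega>) (\<eta> 2 \<omega>)"
      by (rule collapse2) (use x in \<open>auto simp: A_def\<close>)
    finally show ?case by simp
  qed
  have "integral\<^sup>L M (\<lambda>\<omega>. g (X1 \<omega>) (\<eta> 2 \<omega>)) = integral\<^sup>L M (\<lambda>\<omega>. \<Sum>a\<in>A. \<Sum>b\<in>A. T a b \<omega>)"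
    by (rule integral_cong_AE) (use ae Tint in auto)
  also have "\<dots> = (\<Sum>a\<in>A. \<Sum>b\<in>A. integral\<^sup>L M (T a b))"
    by (simp add: Tint Bochner_Integration.integrable_sum Bochner_Integration.integral_sum del: sum.insert)
  also have "\<dots> = (\<Sum>a\<in>A. \<Sum>b\<in>A. prob {\<omega>\<in>space M. X1 \<omega> = a} * (prob {\<omega>\<in>space M. \<eta> 2 \<omega> = b} * g a b))"
    by (simp only: Teq)
  finally show ?thesis unfolding A_def .
qed

lemma PK: "n \<ge> 3 \<Longrightarrow> prob {\<omega>\<in>space M. real (K n \<omega>) = 1} = 1/2"
   "n \<ge> 3 \<Longrightarrow> prob {\<omega>\<in>space M. real (K n \<omega>) = 2} = 1/2"
  using K1 K2 by simp_all

lemma sum12: "(\<Sum>s\<in>{1,2::real}. f s) = f 1 + f 2" by simp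

lemma cross:
  assumes jk: "3 \<le> j" "3 \<le> k" "j \<noteq> k"
  shows "integral\<^sup>L M (\<lambda>\<omega>. Z j \<omega> * Z k \<omega>) = 0"
proof -
  have ne: "j \<noteq> 1" "j \<noteq> 2" "k \<noteq> 1" "k \<noteq> 2" "j \<noteq> k" "k \<noteq> j" using jk by auto
  define A where "A = {-1,0,1::real}"
  define B where "B = {1,2::real}"
  define w where "w a b s = (if s = 1 then a else b * a)" for a b s :: real
  define l where "l a b = (p - q) * a * (1 + b) / 2" for a b :: real
  define J :: "(nat + nat) set" where "J = {Inl 1, Inl 2, Inr j, Inr k, Inl j, Inl k}"
  define \<phi> where "\<phi> a b s t = (\<lambda>(i::nat+nat) y. if i = Inl 1 then (if y = a then 1 else 0)
        else if i = Inl 2 then (if y = b then 1 else 0)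
        else if i = Inr j then (if y = s then 1 else 0)
        else if i = Inr k then (if y = t then 1 else 0)
        else if i = Inl j then y * w a b s - l a b
        else y * w a b t - l a b)" for a b s t :: real
  define T where "T a b s t \<omega> = (\<Prod>i\<in>J. \<phi> a b s t i (F i \<omega>))" for a b s t \<omega>
  have J: "finite J" "J \<subseteq> erw_index" using jk by (auto simp: J_def idx)
  have \<phi>m: "\<phi> a b s t i \<in> borel_measurable borel" for a b s t i
    unfolding \<phi>_def by simp
  have \<phi>i: "integrable M (\<lambda>\<omega>. \<phi> a b s t i (F i \<omega>))" if iJ0: "i \<in> J" for a b s t i
  proof -
    have iJ: "i \<in> erw_index" using iJ0 J by auto
    consider "i = Inl 1" | "i = Inl 2" | "i = Inr j" | "i = Inr k" | "i = Inl j" | "i = Inl k"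
      using iJ0 unfolding J_def by auto
    then show ?thesis
    proof cases
      case 1 then show ?thesis using iJ ne by (auto simp: \<phi>_def intro!: int_comp[where B=1])
    next
      case 2 then show ?thesis using iJ ne by (auto simp: \<phi>_def intro!: int_comp[where B=1])
    next
      case 3 then show ?thesis using iJ ne by (auto simp: \<phi>_def intro!: int_comp[where B=1])
    next
      case 4 then show ?thesis using iJ ne by (auto simp: \<phi>_def intro!: int_comp[where B=1])
    next
      case 5 then show ?thesis using iJ ne
        by (auto simp: \<phi>_def intro!: int_comp[where B="2 * \<bar>w a b s\<bar> + \<bar>l a b\<bar>"] lin_bound)
    next
      case 6 then show ?thesis using iJ ne
        by (auto simp: \<phi>_def intro!: int_comp[where B="2 * \<bar>w a b t\<bar> + \<bar>l a b\<bar>"] lin_bound)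
    qed
  qed
  have Tint: "integrable M (T a b s t)" for a b s t
    unfolding T_def[abs_def] by (rule prod_int(2)[OF J \<phi>m \<phi>i])
  define P1 where "P1 a = prob {\<omega>\<in>space M. X1 \<omega> = a}" for a
  define P2 where "P2 b = prob {\<omega>\<in>space M. \<eta> 2 \<omega> = b}" for b
  define Pj where "Pj s = prob {\<omega>\<in>space M. real (K j \<omega>) = s}" for s
  define Pk where "Pk s = prob {\<omega>\<in>space M. real (K k \<omega>) = s}" for s
  have Kjm[measurable]: "(\<lambda>\<omega>. real (K j \<omega>)) \<in> borel_measurable M"
    using F_meas[of "Inr j"] jk by (simp add: idx F_simps)
  have Kkm[measurable]: "(\<lambda>\<omega>. real (K k \<omega>)) \<in> borel_measurable M"
    using F_meas[of "Inr k"] jk by (simp add: idx F_simps)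
  have etaj[measurable]: "\<eta> j \<in> borel_measurable M" "\<eta> k \<in> borel_measurable M" using etam jk by auto
  have Teq: "integral\<^sup>L M (T a b s t) = P1 a * (P2 b * (Pj s * (Pk t *
      (((p - q) * w a b s - l a b) * ((p - q) * w a b t - l a b)))))" for a b s t
  proof -
    have "integral\<^sup>L M (T a b s t) = (\<Prod>i\<in>J. integral\<^sup>L M (\<lambda>\<omega>. \<phi> a b s t i (F i \<omega>)))"
      unfolding T_def[abs_def] by (rule prod_int(1)[OF J \<phi>m \<phi>i])
    also have "\<dots> = integral\<^sup>L M (\<lambda>\<omega>. if X1 \<omega> = a then 1 else 0) *
        (integral\<^sup>L M (\<lambda>\<omega>. if \<eta> 2 \<omega> = b then 1 else 0) *
        (integral\<^sup>L M (\<lambda>\<omega>. if real (K j \<omega>) = s then 1 else 0) *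
        (integral\<^sup>L M (\<lambda>\<omega>. if real (K k \<omega>) = t then 1 else 0) *
        (integral\<^sup>L M (\<lambda>\<omega>. \<eta> j \<omega> * w a b s - l a b) *
         integral\<^sup>L M (\<lambda>\<omega>. \<eta> k \<omega> * w a b t - l a b)))))"
      using ne by (simp add: J_def \<phi>_def F_simps)
    also have "\<dots> = P1 a * (P2 b * (Pj s * (Pk t *
      (((p - q) * w a b s - l a b) * ((p - q) * w a b t - l a b)))))"
      using jk by (simp add: ind_int eta_lin P1_def P2_def Pj_def Pk_def)
    finally show ?thesis .
  qed
  have ae: "AE \<omega> in M. Z j \<omega> * Z k \<omega> = (\<Sum>a\<in>A. \<Sum>b\<in>A. \<Sum>s\<in>B. \<Sum>t\<in>B. T a b s t \<omega>)"
    using AE_good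
  proof eventually_elim
    case (elim \<omega>)
    then have x: "X1 \<omega> \<in> A" "\<eta> 2 \<omega> \<in> A" "real (K j \<omega>) \<in> B" "real (K k \<omega>) \<in> B"
      using jk by (auto simp: good_def A_def B_def)
    have "(\<Sum>a\<in>A. \<Sum>b\<in>A. \<Sum>s\<in>B. \<Sum>t\<in>B. T a b s t \<omega>) = (\<Sum>a\<in>A. \<Sum>b\<in>A. \<Sum>s\<in>B. \<Sum>t\<in>B.
        (if X1 \<omega> = a then 1 else (0::real)) * ((if \<eta> 2 \<omega> = b then 1 else 0) *
        ((if real (K j \<omega>) = s then 1 else 0) * ((if real (K k \<omega>) = t then 1 else 0) *
        ((\<eta> j \<omega> * w a b s - l a b) * (\<eta> k \<omega> * w a b t - l a b))))))"
      using ne by (intro sum.cong refl) (simp add: T_def J_def \<phi>_def F_simps)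
    also have "\<dots> = (\<eta> j \<omega> * w (X1 \<omega>) (\<eta> 2 \<omega>) (real (K j \<omega>)) - l (X1 \<omega>) (\<eta> 2 \<omega>)) *
        (\<eta> k \<omega> * w (X1 \<omega>) (\<eta> 2 \<omega>) (real (K k \<omega>)) - l (X1 \<omega>) (\<eta> 2 \<omega>))"
      by (rule collapse4[where H="\<lambda>a b s t. (\<eta> j \<omega> * w a b s - l a b) * (\<eta> k \<omega> * w a b t - l a b)"])
        (use x in \<open>auto simp: A_def B_def\<close>)
    also have "\<dots> = Z j \<omega> * Z k \<omega>"
      using jk by (simp add: Z_def erw_X_def w_def l_def L_def)
    finally show ?case by simp
  qed
  have "integral\<^sup>L M (\<lambda>\<omega>. Z j \<omega> * Z k \<omega>) = integral\<^sup>L M (\<lambda>\<omega>. \<Sum>a\<in>A. \<Sum>b\<in>A. \<Sum>s\<in>B. \<Sum>t\<in>B. T a b s t \<omega>)"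
    by (rule integral_cong_AE) (use ae Tint in auto)
  also have "\<dots> = (\<Sum>a\<in>A. \<Sum>b\<in>A. \<Sum>s\<in>B. \<Sum>t\<in>B. integral\<^sup>L M (T a b s t))"
    by (simp add: Tint Bochner_Integration.integrable_sum Bochner_Integration.integral_sum del: sum.insert)
  also have "\<dots> = (\<Sum>a\<in>A. \<Sum>b\<in>A. P1 a * (P2 b * (\<Sum>s\<in>B. \<Sum>t\<in>B. Pj s * (Pk t *
      (((p - q) * w a b s - l a b) * ((p - q) * w a b t - l a b))))))"
    by (simp only: Teq sum_distrib_left)
  also have "\<dots> = 0"
  proof -
    have "(\<Sum>s\<in>B. \<Sum>t\<in>B. Pj s * (Pk t *
      (((p - q) * w a b s - l a b) * ((p - q) * w a b t - l a b)))) = 0" for a b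
    proof -
      have key: "(p - q) * w a b 2 - l a b = - ((p - q) * w a b 1 - l a b)"
        by (simp add: w_def l_def algebra_simps)
      have "(\<Sum>s\<in>B. \<Sum>t\<in>B. Pj s * (Pk t *
        (((p - q) * w a b s - l a b) * ((p - q) * w a b t - l a b)))) = 
        1/2 * (1/2 * (((p - q) * w a b 1 - l a b) * ((p - q) * w a b 1 - l a b))) +
        1/2 * (1/2 * (((p - q) * w a b 1 - l a b) * ((p - q) * w a b 2 - l a b))) +
        (1/2 * (1/2 * (((p - q) * w a b 2 - l a b) * ((p - q) * w a b 1 - l a b))) +
        1/2 * (1/2 * (((p - q) * w a b 2 - l a b) * ((p - q) * w a b 2 - l a b))))"
      proof -
        have k1: "prob {\<omega>\<in>space M. K j \<omega> = Suc 0} = 1/2" "prob {\<omega>\<in>space M. K k \<omega> = Suc 0} = 1/2"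
          using K1[of j] K1[of k] jk by simp_all
        have k2: "prob {\<omega>\<in>space M. K j \<omega> = 2} = 1/2" "prob {\<omega>\<in>space M. K k \<omega> = 2} = 1/2"
          using K2[of j] K2[of k] jk by simp_all
        show ?thesis using jk by (simp add: B_def sum12 Pj_def Pk_def PK k1 k2)
      qed
      also have "\<dots> = 0" unfolding key by (simp add: algebra_simps)
      finally show ?thesis .
    qed
    then show ?thesis by simp
  qed
  finally show ?thesis .
qed


lemma ZZ_bound: "good \<omega> \<Longrightarrow> \<bar>Z j \<omega> * Z k \<omega>\<bar> \<le> 4"
proof -
  assume g: "good \<omega>"
  have a: "\<bar>Z j \<omega>\<bar> \<le> 2" "\<bar>Z k \<omega>\<bar> \<le> 2" using Z_bound[OF g] by auto
  have "\<bar>Z j \<omega>\<bar> * \<bar>Z k \<omega>\<bar> \<le> 2 * 2" by (rule mult_mono) (use a in auto)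
  then show ?thesis by (simp add: abs_mult)
qed

lemma ZZ_int: "integrable M (\<lambda>\<omega>. Z j \<omega> * Z k \<omega>)"
  by (rule int_bound[where B=4]) (use AE_good ZZ_bound in \<open>auto elim: AE_mp\<close>)

lemma e_bound: "\<bar>integral\<^sup>L M (\<lambda>\<omega>. Z j \<omega> * Z k \<omega>)\<bar> \<le> 4"
  by (rule abs_int_le) (use AE_good ZZ_bound in \<open>auto elim: AE_mp\<close>)

lemma sumbound:
  fixes e :: "nat \<Rightarrow> nat \<Rightarrow> real"
  assumes e: "\<And>j k. j \<in> {1..n} \<Longrightarrow> k \<in> {1..n} \<Longrightarrow> e j k \<le> 4 * (if j \<le> 2 then 1 else 0) + 4 * (if k \<le> 2 then 1 else 0) + 4 * (if j = k then 1 else 0)"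
  shows "(\<Sum>j=1..n. \<Sum>k=1..n. e j k) \<le> 20 * real n"
proof -
  define I where "I j = (if j \<le> 2 then 1 else (0::real))" for j :: nat
  define C where "C = (\<Sum>j=1..n. I j)"
  have "(\<Sum>j=1..n. I j) = (\<Sum>j\<in>{1..n} \<inter> {j. j \<le> 2}. 1)"
    unfolding I_def by (simp add: sum.If_cases)
  also have "\<dots> = real (card ({1..n} \<inter> {j. j \<le> 2}))" by simp
  also have "card ({1..n} \<inter> {j. j \<le> 2}) \<le> card {1::nat, 2}" by (rule card_mono) auto
  then have "real (card ({1..n} \<inter> {j. j \<le> 2})) \<le> 2" by simp
  finally have C2: "C \<le> 2" unfolding C_def .
  have C0: "C \<ge> 0" unfolding C_def I_def by (rule sum_nonneg) auto
  have "(\<Sum>j=1..n. \<Sum>k=1..n. e j k) \<le> (\<Sum>j=1..n. \<Sum>k=1..n. 4 * I j + 4 * I k + 4 * (if j = k then 1 else 0))"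
    by (intro sum_mono) (use e in \<open>auto simp: I_def\<close>)
  also have "\<dots> \<le> (\<Sum>j=1..n. real n * (4 * I j) + 4 * C + 4)"
  proof (rule sum_mono)
    fix j assume j: "j \<in> {1..n}"
    have a: "(\<Sum>k=1..n. 4 * I j) = real n * (4 * I j)" by simp
    have b: "(\<Sum>k=1..n. 4 * I k) = 4 * C" by (simp add: C_def sum_distrib_left)
    have c: "(\<Sum>k=1..n. 4 * (if j = k then 1 else (0::real))) \<le> 4"
    proof -
      have "(\<Sum>k=1..n. 4 * (if j = k then 1 else (0::real))) = (\<Sum>k=1..n. (if j = k then 4 else 0))"
        by (rule sum.cong) auto
      also have "\<dots> \<le> 4" by simp
      finally show ?thesis .
    qed
    show "(\<Sum>k=1..n. 4 * I j + 4 * I k + 4 * (if j = k then 1 else 0)) \<le> real n * (4 * I j) + 4 * C + 4"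
      using a b c by (simp add: sum.distrib)
  qed
  also have "\<dots> = 4 * real n * C + real n * (4 * C + 4)"
    by (simp add: sum.distrib C_def sum_distrib_left algebra_simps)
  also have "\<dots> \<le> 20 * real n"
  proof -
    have "real n * C \<le> real n * 2" using C2 by (simp add: mult_left_mono)
    then show ?thesis by (simp add: algebra_simps)
  qed
  finally show ?thesis .
qed

definition Y where "Y n \<omega> = erw_S X1 \<eta> K n \<omega> / real n"

lemma Y_meas[measurable]: "Y n \<in> borel_measurable M"
  unfolding Y_def[abs_def] erw_S_def by measurable

lemma Y_bound: "good \<omega> \<Longrightarrow> \<bar>Y n \<omega>\<bar> \<le> 1"
proof -
  assume g: "good \<omega>"
  have "\<bar>erw_S X1 \<eta> K n \<omega>\<bar> \<le> (\<Sum>k=1..n. \<bar>erw_X X1 \<eta> K k \<omega>\<bar>)"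
    unfolding erw_S_def by (rule sum_abs)
  also have "\<dots> \<le> real (card {1..n}) * 1"
    by (rule sum_bounded_above) (use X_bound[OF g] in auto)
  finally have s: "\<bar>erw_S X1 \<eta> K n \<omega>\<bar> \<le> real n" by simp
  show ?thesis
  proof (cases "n = 0")
    case True then show ?thesis by (simp add: Y_def)
  next
    case False
    then show ?thesis using s by (simp add: Y_def abs_divide divide_le_eq)
  qed
qed

lemma D_eq: "n \<ge> 1 \<Longrightarrow> Y n \<omega> - L \<omega> = (\<Sum>k=1..n. Z k \<omega>) / real n"
proof -
  assume n: "n \<ge> 1"
  have "(\<Sum>k=1..n. Z k \<omega>) = erw_S X1 \<eta> K n \<omega> - real n * L \<omega>"
    by (simp add: Z_def erw_S_def sum_subtractf)
  then show ?thesis using n by (simp add: Y_def field_simps)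
qed

lemma good_int:
  fixes f :: "'a \<Rightarrow> real" and B :: real
  assumes "f \<in> borel_measurable M" "\<And>\<omega>. good \<omega> \<Longrightarrow> \<bar>f \<omega>\<bar> \<le> B"
  shows "integrable M f"
  by (rule int_bound[where B=B]) (use assms AE_good in \<open>auto elim: AE_mp\<close>)

lemma D2: "n \<ge> 1 \<Longrightarrow> integral\<^sup>L M (\<lambda>\<omega>. (Y n \<omega> - L \<omega>)^2) \<le> 20 / real n"
proof -
  assume n: "n \<ge> 1"
  have "integral\<^sup>L M (\<lambda>\<omega>. (Y n \<omega> - L \<omega>)^2) = 
     integral\<^sup>L M (\<lambda>\<omega>. (\<Sum>j=1..n. \<Sum>k=1..n. Z j \<omega> * Z k \<omega>) / (real n)^2)"
    by (rule Bochner_Integration.integral_cong)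
       (use n in \<open>simp_all add: D_eq power_divide power2_eq_square sum_product\<close>)
  also have "\<dots> = integral\<^sup>L M (\<lambda>\<omega>. \<Sum>j=1..n. \<Sum>k=1..n. Z j \<omega> * Z k \<omega>) / (real n)^2"
    by simp
  also have "integral\<^sup>L M (\<lambda>\<omega>. \<Sum>j=1..n. \<Sum>k=1..n. Z j \<omega> * Z k \<omega>) = 
      (\<Sum>j=1..n. \<Sum>k=1..n. integral\<^sup>L M (\<lambda>\<omega>. Z j \<omega> * Z k \<omega>))"
    by (simp add: ZZ_int Bochner_Integration.integrable_sum Bochner_Integration.integral_sum)
  also have "\<dots> \<le> 20 * real n"
  proof (rule sumbound)
    fix j k assume jk: "j \<in> {1..n}" "k \<in> {1..n}"
    show "integral\<^sup>L M (\<lambda>\<omega>. Z j \<omega> * Z k \<omega>) \<le> 4 * (if j \<le> 2 then 1 else 0) + 4 * (if k \<le> 2 then 1 else 0) + 4 * (if j = k then 1 else 0)"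
    proof (cases "3 \<le> j \<and> 3 \<le> k \<and> j \<noteq> k")
      case True then show ?thesis using cross[of j k] by simp
    next
      case False
      then have "4 \<le> 4 * (if j \<le> 2 then 1 else 0) + 4 * (if k \<le> 2 then 1 else 0) + 4 * (if j = k then 1 else (0::real))"
        by auto
      then show ?thesis using e_bound[of j k] by linarith
    qed
  qed
  finally show ?thesis using n by (simp add: divide_right_mono power2_eq_square)
qed

lemma sq_int_le:
  fixes f :: "'a \<Rightarrow> real"
  assumes "integrable M f" "integrable M (\<lambda>x. (f x)^2)"
  shows "(integral\<^sup>L M f)^2 \<le> integral\<^sup>L M (\<lambda>x. (f x)^2)"
  using variance_positive[of f] variance_eq[OF assms] by simp

lemma sq_le: fixes x c :: real assumes "\<bar>x\<bar> \<le> c" shows "\<bar>x^2\<bar> \<le> c^2"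
proof -
  have "\<bar>x\<bar>^2 \<le> c^2" by (rule power_mono) (use assms in auto)
  then show ?thesis by simp
qed

lemma D_bound: "good \<omega> \<Longrightarrow> \<bar>Y n \<omega> - L \<omega>\<bar> \<le> 2"
  using Y_bound[of \<omega> n] L_bound[of \<omega>] by linarith

lemma DL_bound: "good \<omega> \<Longrightarrow> \<bar>(Y n \<omega> - L \<omega>) * L \<omega>\<bar> \<le> 2"
proof -
  assume g: "good \<omega>"
  have "\<bar>Y n \<omega> - L \<omega>\<bar> * \<bar>L \<omega>\<bar> \<le> 2 * 1"
    by (rule mult_mono) (use D_bound[OF g] L_bound[OF g] in auto)
  then show ?thesis by (simp add: abs_mult)
qed

lemma good_int2:
  fixes f :: "'a \<Rightarrow> real" and B :: real
  assumes f: "f \<in> borel_measurable M" and b: "\<And>\<omega>. good \<omega> \<Longrightarrow> \<bar>f \<omega>\<bar> \<le> B"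
  shows "integrable M (\<lambda>\<omega>. (f \<omega>)^2)"
proof (rule good_int[where B="B^2"])
  show "(\<lambda>\<omega>. (f \<omega>)^2) \<in> borel_measurable M" using f by measurable
  fix \<omega> assume "good \<omega>" then show "\<bar>(f \<omega>)^2\<bar> \<le> B^2" by (rule sq_le[OF b])
qed

lemma L_int: "integrable M L" "integrable M (\<lambda>\<omega>. (L \<omega>)^2)"
  using good_int[OF L_meas L_bound] good_int2[OF L_meas L_bound] by auto

lemma Y_int: "integrable M (Y n)" "integrable M (\<lambda>\<omega>. (Y n \<omega>)^2)"
  using good_int[OF Y_meas Y_bound] good_int2[OF Y_meas Y_bound] by auto

lemma D_meas[measurable]: "(\<lambda>\<omega>. Y n \<omega> - L \<omega>) \<in> borel_measurable M" by measurable

lemma D_int: "integrable M (\<lambda>\<omega>. Y n \<omega> - L \<omega>)" "integrable M (\<lambda>\<omega>. (Y n \<omega> - L \<omega>)^2)"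
  using good_int[OF D_meas D_bound] good_int2[OF D_meas D_bound] by auto

lemma sqrt_lim: "(\<lambda>n. sqrt (20 / real n)) \<longlonglongrightarrow> 0"
  using tendsto_real_sqrt[OF lim_const_over_n[of "20::real"]] by simp

lemma EY: "(\<lambda>n. integral\<^sup>L M (Y n)) \<longlonglongrightarrow> integral\<^sup>L M L"
proof (rule LIM_zero_cancel, rule Lim_null_comparison[OF _ sqrt_lim])
  show "\<forall>\<^sub>F n in sequentially. norm (integral\<^sup>L M (Y n) - integral\<^sup>L M L) \<le> sqrt (20 / real n)"
    using eventually_ge_at_top[of "1::nat"]
  proof eventually_elim
    case (elim n)
    have "integral\<^sup>L M (Y n) - integral\<^sup>L M L = integral\<^sup>L M (\<lambda>\<omega>. Y n \<omega> - L \<omega>)"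
      using Y_int L_int by simp
    moreover have "(integral\<^sup>L M (\<lambda>\<omega>. Y n \<omega> - L \<omega>))^2 \<le> 20 / real n"
      using sq_int_le[OF D_int(1)[of n] D_int(2)[of n]] D2[OF elim] by linarith
    ultimately show ?case by (simp add: real_le_rsqrt)
  qed
qed

lemma EY2: "(\<lambda>n. integral\<^sup>L M (\<lambda>\<omega>. (Y n \<omega>)^2)) \<longlonglongrightarrow> integral\<^sup>L M (\<lambda>\<omega>. (L \<omega>)^2)"
proof (rule LIM_zero_cancel, rule Lim_null_comparison)
  show "(\<lambda>n. 20 / real n + 2 * sqrt (20 / real n)) \<longlonglongrightarrow> 0"
    using tendsto_add[OF lim_const_over_n[of "20::real"] tendsto_mult_right_zero[OF sqrt_lim, of 2]]
    by simp
  show "\<forall>\<^sub>F n in sequentially. norm (integral\<^sup>L M (\<lambda>\<omega>. (Y n \<omega>)^2) - integral\<^sup>L M (\<lambda>\<omega>. (L \<omega>)^2))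
       \<le> 20 / real n + 2 * sqrt (20 / real n)"
    using eventually_ge_at_top[of "1::nat"]
  proof eventually_elim
    case (elim n)
    have DL_int: "integrable M (\<lambda>\<omega>. (Y n \<omega> - L \<omega>) * L \<omega>)"
      by (rule good_int[OF _ DL_bound]) measurable
    have DL2_int: "integrable M (\<lambda>\<omega>. ((Y n \<omega> - L \<omega>) * L \<omega>)^2)"
      by (rule good_int2[OF _ DL_bound]) measurable
    have eq: "integral\<^sup>L M (\<lambda>\<omega>. (Y n \<omega>)^2) - integral\<^sup>L M (\<lambda>\<omega>. (L \<omega>)^2) =
       integral\<^sup>L M (\<lambda>\<omega>. (Y n \<omega> - L \<omega>)^2) + 2 * integral\<^sup>L M (\<lambda>\<omega>. (Y n \<omega> - L \<omega>) * L \<omega>)"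
    proof -
      have "integral\<^sup>L M (\<lambda>\<omega>. (Y n \<omega>)^2) = integral\<^sup>L M (\<lambda>\<omega>. (Y n \<omega> - L \<omega>)^2 + 2 * ((Y n \<omega> - L \<omega>) * L \<omega>) + (L \<omega>)^2)"
        by (rule Bochner_Integration.integral_cong) (simp_all add: power2_eq_square algebra_simps)
      also have "\<dots> = integral\<^sup>L M (\<lambda>\<omega>. (Y n \<omega> - L \<omega>)^2) + 2 * integral\<^sup>L M (\<lambda>\<omega>. (Y n \<omega> - L \<omega>) * L \<omega>) + integral\<^sup>L M (\<lambda>\<omega>. (L \<omega>)^2)"
        using D_int DL_int L_int by simp
      finally show ?thesis by simp
    qed
    have "(integral\<^sup>L M (\<lambda>\<omega>. (Y n \<omega> - L \<omega>) * L \<omega>))^2 \<le> integral\<^sup>L M (\<lambda>\<omega>. ((Y n \<omega> - L \<omega>) * L \<omega>)^2)"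
      by (rule sq_int_le[OF DL_int DL2_int])
    also have "\<dots> \<le> integral\<^sup>L M (\<lambda>\<omega>. (Y n \<omega> - L \<omega>)^2)"
    proof (rule integral_mono_AE[OF DL2_int D_int(2)])
      show "AE \<omega> in M. ((Y n \<omega> - L \<omega>) * L \<omega>)^2 \<le> (Y n \<omega> - L \<omega>)^2"
        using AE_good
      proof eventually_elim
        case (elim \<omega>)
        have "(L \<omega>)^2 \<le> 1" using L_bound[OF elim] by (simp add: abs_square_le_1)
        then have "(Y n \<omega> - L \<omega>)^2 * (L \<omega>)^2 \<le> (Y n \<omega> - L \<omega>)^2 * 1"
          by (rule mult_left_mono) simp
        then show ?case by (simp add: power_mult_distrib)
      qed
    qed
    also have "\<dots> \<le> 20 / real n" by (rule D2[OF elim])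
    finally have "\<bar>integral\<^sup>L M (\<lambda>\<omega>. (Y n \<omega> - L \<omega>) * L \<omega>)\<bar> \<le> sqrt (20 / real n)"
      by (simp add: real_le_rsqrt)
    moreover have "0 \<le> integral\<^sup>L M (\<lambda>\<omega>. (Y n \<omega> - L \<omega>)^2)" by (rule integral_nonneg_AE) simp
    moreover note D2[OF elim]
    ultimately show ?case unfolding real_norm_def eq by linarith
  qed
qed

lemma VarY: "(\<lambda>n. integral\<^sup>L M (\<lambda>\<omega>. (Y n \<omega> - integral\<^sup>L M (Y n))^2)) \<longlonglongrightarrow>
    integral\<^sup>L M (\<lambda>\<omega>. (L \<omega>)^2) - (integral\<^sup>L M L)^2"
proof -
  have "(\<lambda>n. integral\<^sup>L M (\<lambda>\<omega>. (Y n \<omega> - integral\<^sup>L M (Y n))^2)) =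
        (\<lambda>n. integral\<^sup>L M (\<lambda>\<omega>. (Y n \<omega>)^2) - (integral\<^sup>L M (Y n))^2)"
    using variance_eq[OF Y_int] by simp
  moreover have "(\<lambda>n. integral\<^sup>L M (\<lambda>\<omega>. (Y n \<omega>)^2) - (integral\<^sup>L M (Y n))^2) \<longlonglongrightarrow>
    integral\<^sup>L M (\<lambda>\<omega>. (L \<omega>)^2) - (integral\<^sup>L M L)^2"
    by (intro tendsto_intros EY EY2)
  ultimately show ?thesis by simp
qed


lemma sum3: "(\<Sum>a\<in>{-1,0,1::real}. f a) = f (-1) + (f 0 + f 1)" by simp

lemma gvals: "(p - q) * -1 * (1 + -1) / 2 = 0" "(p - q) * -1 * (1 + 0) / 2 = -(p - q) / 2"
  "(p - q) * -1 * (1 + 1) / 2 = -(p - q)" "(p - q) * 0 * (1 + b) / 2 = 0"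
  "(p - q) * 1 * (1 + -1) / 2 = 0" "(p - q) * 1 * (1 + 0) / 2 = (p - q) / 2"
  "(p - q) * 1 * (1 + 1) / 2 = p - q"
  by simp_all

lemma r_eq: "r = 1 - p - q" using pq by simp

lemma P_vals: "prob {\<omega>\<in>space M. X1 \<omega> = -1} = q" "prob {\<omega>\<in>space M. X1 \<omega> = 0} = r"
  "prob {\<omega>\<in>space M. X1 \<omega> = 1} = p"
  "prob {\<omega>\<in>space M. \<eta> 2 \<omega> = -1} = q" "prob {\<omega>\<in>space M. \<eta> 2 \<omega> = 0} = r"
  "prob {\<omega>\<in>space M. \<eta> 2 \<omega> = 1} = p"
  using X1p X1q X1r etap[of 2] etaq[of 2] etar[of 2] by auto

lemma EL: "integral\<^sup>L M L = (p - q)^2 / 2 * (1 + p - q)"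
proof -
  have m: "(\<lambda>\<omega>. (p - q) * X1 \<omega> * (1 + \<eta> 2 \<omega>) / 2) \<in> borel_measurable M" by measurable
  have "integral\<^sup>L M L = (\<Sum>a\<in>{-1,0,1}. \<Sum>b\<in>{-1,0,1}.
     prob {\<omega>\<in>space M. X1 \<omega> = a} * (prob {\<omega>\<in>space M. \<eta> 2 \<omega> = b} * ((p - q) * a * (1 + b) / 2)))"
    unfolding L_def[abs_def] by (rule E2[where g="\<lambda>a b. (p - q) * a * (1 + b) / 2", OF m])
  also have "\<dots> = (p - q)^2 / 2 * (1 + p - q)"
    unfolding sum3 P_vals gvals r_eq by (simp add: field_simps power2_eq_square)
  finally show ?thesis .
qed

lemma EL2: "integral\<^sup>L M (\<lambda>\<omega>. (L \<omega>)^2) = (p - q)^2 / 4 * (p + q) * (4 * p + r)"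
proof -
  have m: "(\<lambda>\<omega>. ((p - q) * X1 \<omega> * (1 + \<eta> 2 \<omega>) / 2)^2) \<in> borel_measurable M" by measurable
  have "integral\<^sup>L M (\<lambda>\<omega>. (L \<omega>)^2) = (\<Sum>a\<in>{-1,0,1}. \<Sum>b\<in>{-1,0,1}.
     prob {\<omega>\<in>space M. X1 \<omega> = a} * (prob {\<omega>\<in>space M. \<eta> 2 \<omega> = b} * ((p - q) * a * (1 + b) / 2)^2))"
    unfolding L_def[abs_def] by (rule E2[where g="\<lambda>a b. ((p - q) * a * (1 + b) / 2)^2", OF m])
  also have "\<dots> = (p - q)^2 / 4 * (p + q) * (4 * p + r)"
    unfolding sum3 P_vals gvals r_eq by (simp add: field_simps power2_eq_square)
  finally show ?thesis .
qed

lemma measure_pmf_of_list':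
  assumes wf: "pmf_of_list_wf xs"
  shows "measure (measure_pmf (pmf_of_list xs)) A = sum_list (map snd (filter (\<lambda>x. fst x \<in> A) xs))"
proof -
  have "0 \<le> sum_list (map snd (filter (\<lambda>x. fst x \<in> A) xs))"
    by (rule sum_list_nonneg) (use wf in \<open>auto simp: pmf_of_list_wf_def\<close>)
  then show ?thesis by (simp add: measure_def emeasure_pmf_of_list[OF wf])
qed

lemma sl: "sum_list (map snd (filter (\<lambda>x. fst x \<in> A) ((a,w)#xs))) =
   (if a \<in> A then w else 0) + sum_list (map snd (filter (\<lambda>x. fst x \<in> A) xs))"
  by simp

lemma cdfL: "prob {\<omega>\<in>space M. L \<omega> \<le> y} = measure (measure_pmf (erw_limit p q r)) {..y}"
proof -
  define I where "I x = (if x \<le> y then 1 else (0::real))" for x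
  have if_to_I: "(if x \<in> {..y} then w else 0) = w * I x" for x w by (simp add: I_def)
  have "prob {\<omega>\<in>space M. L \<omega> \<le> y} = integral\<^sup>L M (indicator {\<omega>\<in>space M. L \<omega> \<le> y} :: 'a \<Rightarrow> real)"
    by (simp add: Int_absorb2)
  also have "\<dots> = integral\<^sup>L M (\<lambda>\<omega>. I ((p - q) * X1 \<omega> * (1 + \<eta> 2 \<omega>) / 2))"
    by (rule Bochner_Integration.integral_cong) (auto simp: indicator_def I_def L_def)
  also have "\<dots> = (\<Sum>a\<in>{-1,0,1}. \<Sum>b\<in>{-1,0,1}.
     prob {\<omega>\<in>space M. X1 \<omega> = a} * (prob {\<omega>\<in>space M. \<eta> 2 \<omega> = b} * I ((p - q) * a * (1 + b) / 2)))"
  proof (rule E2[where g="\<lambda>a b. I ((p - q) * a * (1 + b) / 2)"])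
    show "(\<lambda>\<omega>. I ((p - q) * X1 \<omega> * (1 + \<eta> 2 \<omega>) / 2)) \<in> borel_measurable M"
      unfolding I_def by measurable
  qed
  also have "\<dots> = q * (q * I 0 + (r * I (-(p-q)/2) + p * I (-(p-q)))) + (r * (q * I 0 + (r * I 0 + p * I 0)) +
       p * (q * I 0 + (r * I ((p-q)/2) + p * I (p - q))))"
    unfolding sum3 P_vals gvals by (simp add: algebra_simps)
  also have "\<dots> = p^2 * I (p - q) + (p * r * I ((p - q)/2) + ((p*q + q^2 + r) * I 0 + (q * r * I (-(p - q)/2) + (p * q * I (-(p - q)) + 0))))"
    unfolding r_eq by (simp add: field_simps power2_eq_square)
  also have "\<dots> = sum_list (map snd (filter (\<lambda>x. fst x \<in> {..y})
     [(p - q, p^2), ((p - q)/2, p*r), (0, p*q + q^2 + r), (-(p - q)/2, q*r), (-(p - q), p*q)]))"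
    unfolding sl if_to_I by simp
  also have "\<dots> = measure (measure_pmf (erw_limit p q r)) {..y}"
  proof -
    have wf: "pmf_of_list_wf [(p - q, p^2), ((p - q)/2, p*r), (0, p*q + q^2 + r), (-(p - q)/2, q*r), (-(p - q), p*q)]"
    proof (rule pmf_of_list_wfI)
      show "sum_list (map snd [(p - q, p^2), ((p - q)/2, p*r), (0, p*q + q^2 + r), (-(p - q)/2, q*r), (-(p - q), p*q)]) = 1"
        unfolding r_eq by (simp add: field_simps power2_eq_square)
      show "x \<in> set (map snd [(p - q, p^2), ((p - q)/2, p*r), (0, p*q + q^2 + r), (-(p - q)/2, q*r), (-(p - q), p*q)]) \<Longrightarrow> 0 \<le> x" for x
        using pq by auto
    qed
    show ?thesis
      unfolding erw_limit_def by (rule measure_pmf_of_list'[OF wf, symmetric])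
  qed
  finally show ?thesis .
qed

lemma weak: "weak_conv_m (\<lambda>n. distr M borel (Y n)) (measure_pmf (erw_limit p q r))"
  unfolding weak_conv_m_def weak_conv_def cdf_def
proof (intro allI impI)
  fix x
  define G where "G x = measure (measure_pmf (erw_limit p q r)) {..x}" for x
  assume "isCont (\<lambda>x. measure (measure_pmf (erw_limit p q r)) {..x}) x"
  then have cont: "isCont G x" unfolding G_def .
  have cd: "measure (distr M borel (Y n)) {..x} = prob {\<omega>\<in>space M. Y n \<omega> \<le> x}" for n
  proof -
    have "measure (distr M borel (Y n)) {..x} = prob (Y n -` {..x} \<inter> space M)"
      by (rule measure_distr) auto
    also have "Y n -` {..x} \<inter> space M = {\<omega>\<in>space M. Y n \<omega> \<le> x}" by auto
    finally show ?thesis .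
  qed
  show "(\<lambda>n. measure (distr M borel (Y n)) {..x}) \<longlonglongrightarrow> measure (measure_pmf (erw_limit p q r)) {..x}"
    unfolding cd G_def[symmetric]
  proof (rule LIMSEQ_I)
    fix e :: real assume e: "0 < e"
    from cont[unfolded isCont_def LIM_eq] e obtain d where d: "d > 0"
      and dG: "\<And>z. z \<noteq> x \<Longrightarrow> norm (z - x) < d \<Longrightarrow> norm (G z - G x) < e/2"
      by (meson half_gt_zero)
    define \<epsilon> where "\<epsilon> = d / 2"
    have \<epsilon>: "\<epsilon> > 0" using d by (simp add: \<epsilon>_def)
    have "\<bar>G (x + \<epsilon>) - G x\<bar> < e/2" using dG[of "x + \<epsilon>"] d by (simp add: \<epsilon>_def)
    then have Gp: "G (x + \<epsilon>) < G x + e/2" by linarith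
    have "\<bar>G (x - \<epsilon>) - G x\<bar> < e/2" using dG[of "x - \<epsilon>"] d by (simp add: \<epsilon>_def)
    then have Gm: "G (x - \<epsilon>) > G x - e/2" by linarith
    obtain N0 :: nat where N0: "40 / (e * \<epsilon>^2) < real N0" using reals_Archimedean2 by blast
    define N where "N = max 1 N0"
    show "\<exists>no. \<forall>n\<ge>no. norm (prob {\<omega>\<in>space M. Y n \<omega> \<le> x} - G x) < e"
    proof (intro exI allI impI)
      fix n assume n: "N \<le> n"
      then have n1: "n \<ge> 1" by (simp add: N_def)
      have nN0: "real N0 \<le> real n" using n by (simp add: N_def)
      have tail: "prob {\<omega>\<in>space M. \<epsilon> \<le> \<bar>Y n \<omega> - L \<omega>\<bar>} \<le> (20 / real n) / \<epsilon>^2"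
      proof -
        have "prob {\<omega>\<in>space M. \<epsilon> \<le> \<bar>Y n \<omega> - L \<omega>\<bar>} \<le> integral\<^sup>L M (\<lambda>\<omega>. (Y n \<omega> - L \<omega>)^2) / \<epsilon>^2"
          by (rule second_moment_method[OF D_meas D_int(2) \<epsilon>])
        also have "\<dots> \<le> (20 / real n) / \<epsilon>^2"
          by (rule divide_right_mono[OF D2[OF n1]]) simp
        finally show ?thesis .
      qed
      have small: "(20 / real n) / \<epsilon>^2 < e / 2"
      proof -
        have "40 / (e * \<epsilon>^2) < real n" using N0 nN0 by linarith
        then have "40 < real n * (e * \<epsilon>^2)" using e \<epsilon> by (simp add: divide_less_eq)
        then show ?thesis using e \<epsilon> n1 by (simp add: field_simps)
      qed
      have S1: "{\<omega>\<in>space M. Y n \<omega> \<le> x} \<subseteq> {\<omega>\<in>space M. L \<omega> \<le> x + \<epsilon>} \<union> {\<omega>\<in>space M. \<epsilon> \<le> \<bar>Y n \<omega> - L \<omega>\<bar>}"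
        by auto
      have S2: "{\<omega>\<in>space M. L \<omega> \<le> x - \<epsilon>} \<subseteq> {\<omega>\<in>space M. Y n \<omega> \<le> x} \<union> {\<omega>\<in>space M. \<epsilon> \<le> \<bar>Y n \<omega> - L \<omega>\<bar>}"
        by auto
      have up: "prob {\<omega>\<in>space M. Y n \<omega> \<le> x} \<le> G (x + \<epsilon>) + prob {\<omega>\<in>space M. \<epsilon> \<le> \<bar>Y n \<omega> - L \<omega>\<bar>}"
      proof -
        have "prob {\<omega>\<in>space M. Y n \<omega> \<le> x} \<le> prob ({\<omega>\<in>space M. L \<omega> \<le> x + \<epsilon>} \<union> {\<omega>\<in>space M. \<epsilon> \<le> \<bar>Y n \<omega> - L \<omega>\<bar>})"
          by (rule finite_measure_mono[OF S1]) measurable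
        also have "\<dots> \<le> prob {\<omega>\<in>space M. L \<omega> \<le> x + \<epsilon>} + prob {\<omega>\<in>space M. \<epsilon> \<le> \<bar>Y n \<omega> - L \<omega>\<bar>}"
          by (rule measure_subadditive; auto simp: emeasure_finite)
        finally show ?thesis by (simp add: cdfL G_def)
      qed
      have lo: "G (x - \<epsilon>) \<le> prob {\<omega>\<in>space M. Y n \<omega> \<le> x} + prob {\<omega>\<in>space M. \<epsilon> \<le> \<bar>Y n \<omega> - L \<omega>\<bar>}"
      proof -
        have "G (x - \<epsilon>) = prob {\<omega>\<in>space M. L \<omega> \<le> x - \<epsilon>}" by (simp add: cdfL G_def)
        also have "\<dots> \<le> prob ({\<omega>\<in>space M. Y n \<omega> \<le> x} \<union> {\<omega>\<in>space M. \<epsilon> \<le> \<bar>Y n \<omega> - L \<omega>\<bar>})"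
          by (rule finite_measure_mono[OF S2]) measurable
        also have "\<dots> \<le> prob {\<omega>\<in>space M. Y n \<omega> \<le> x} + prob {\<omega>\<in>space M. \<epsilon> \<le> \<bar>Y n \<omega> - L \<omega>\<bar>}"
          by (rule measure_subadditive; auto simp: emeasure_finite)
        finally show ?thesis .
      qed
      have "0 \<le> prob {\<omega>\<in>space M. \<epsilon> \<le> \<bar>Y n \<omega> - L \<omega>\<bar>}" by simp
      then show "norm (prob {\<omega>\<in>space M. Y n \<omega> \<le> x} - G x) < e"
        using up lo Gp Gm tail small by (simp add: abs_less_iff)
    qed
  qed
qed

lemma final:
  "weak_conv_m (\<lambda>n. distr M borel (\<lambda>\<omega>. erw_S X1 \<eta> K n \<omega> / real n))
           (measure_pmf (erw_limit p q r))
       \<and> (\<lambda>n. integral\<^sup>L M (\<lambda>\<omega>. erw_S X1 \<eta> K n \<omega> / real n))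
           \<longlonglongrightarrow> (p - q)^2 / 2 * (1 + p - q)
       \<and> (\<lambda>n. integral\<^sup>L M (\<lambda>\<omega>. (erw_S X1 \<eta> K n \<omega> / real n
              - integral\<^sup>L M (\<lambda>\<omega>'. erw_S X1 \<eta> K n \<omega>' / real n))^2))
           \<longlonglongrightarrow> (p - q)^2 / 4 * ((p + q) * (1 + 3*p - q) - (p - q)^2 * (1 + (p - q))^2)"
proof -
  have Yeq: "erw_S X1 \<eta> K n \<omega> / real n = Y n \<omega>" for n \<omega> by (simp add: Y_def)
  have v: "integral\<^sup>L M (\<lambda>\<omega>. (L \<omega>)^2) - (integral\<^sup>L M L)^2 =
     (p - q)^2 / 4 * ((p + q) * (1 + 3*p - q) - (p - q)^2 * (1 + (p - q))^2)"
    unfolding EL EL2 r_eq by (simp add: field_simps power2_eq_square)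
  have VarY': "(\<lambda>n. integral\<^sup>L M (\<lambda>\<omega>. (Y n \<omega> - integral\<^sup>L M (Y n))^2)) \<longlonglongrightarrow>
     (p - q)^2 / 4 * ((p + q) * (1 + 3*p - q) - (p - q)^2 * (1 + (p - q))^2)"
    using VarY unfolding v .
  show ?thesis
    unfolding Yeq using weak EY VarY' unfolding EL by simp
qed

end

theorem theorem6p1:
  fixes M :: "'a measure" and X1 :: "'a \<Rightarrow> real" and \<eta> :: "nat \<Rightarrow> 'a \<Rightarrow> real"
    and K :: "nat \<Rightarrow> 'a \<Rightarrow> nat" and p q r :: real
  assumes "prob_space M"
    and "0 < p" "p < 1" "0 < q" "q < 1" "0 < r" "r < 1" "p + q + r = 1"
    and "X1 \<in> borel_measurable M"
    and "measure M {\<omega>\<in>space M. X1 \<omega> = 1} = p"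
    and "measure M {\<omega>\<in>space M. X1 \<omega> = -1} = q"
    and "measure M {\<omega>\<in>space M. X1 \<omega> = 0} = r"
    and "\<And>n. n \<ge> 2 \<Longrightarrow> \<eta> n \<in> borel_measurable M"
    and "\<And>n. n \<ge> 2 \<Longrightarrow> measure M {\<omega>\<in>space M. \<eta> n \<omega> = 1} = p"
    and "\<And>n. n \<ge> 2 \<Longrightarrow> measure M {\<omega>\<in>space M. \<eta> n \<omega> = -1} = q"
    and "\<And>n. n \<ge> 2 \<Longrightarrow> measure M {\<omega>\<in>space M. \<eta> n \<omega> = 0} = r"
    and "\<And>n. n \<ge> 3 \<Longrightarrow> K n \<in> measurable M (count_space UNIV)"
    and "\<And>n. n \<ge> 3 \<Longrightarrow> measure M {\<omega>\<in>space M. K n \<omega> = 1} = 1/2"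
    and "\<And>n. n \<ge> 3 \<Longrightarrow> measure M {\<omega>\<in>space M. K n \<omega> = 2} = 1/2"
    and "prob_space.indep_vars M (\<lambda>_. borel) (erw_family X1 \<eta> K) erw_index"
  shows "weak_conv_m (\<lambda>n. distr M borel (\<lambda>\<omega>. erw_S X1 \<eta> K n \<omega> / real n))
           (measure_pmf (erw_limit p q r))
       \<and> (\<lambda>n. integral\<^sup>L M (\<lambda>\<omega>. erw_S X1 \<eta> K n \<omega> / real n))
           \<longlonglongrightarrow> (p - q)^2 / 2 * (1 + p - q)
       \<and> (\<lambda>n. integral\<^sup>L M (\<lambda>\<omega>. (erw_S X1 \<eta> K n \<omega> / real n
              - integral\<^sup>L M (\<lambda>\<omega>'. erw_S X1 \<eta> K n \<omega>' / real n))^2))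
           \<longlonglongrightarrow> (p - q)^2 / 4 * ((p + q) * (1 + 3*p - q) - (p - q)^2 * (1 + (p - q))^2)"
proof -
  have "erw M X1 \<eta> K p q r"
    unfolding erw_def erw_axioms_def using assms by auto
  then interpret E: erw M X1 \<eta> K p q r .
  show ?thesis by (rule E.final)
qed

end
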